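(* Let $n\ge2$ and let $\lambda_1>\lambda_2>\dots>\lambda_n$ be distinct real numbers, and let $\mu_1>\dots>\mu_{n-1}$ be the critical points of $q(x)=\prod_{j=1}^n(x-\lambda_j)$ (so $\lambda_k>\mu_k>\lambda_{k+1}$). Define the $(n-1)\times n$ matrix $W$ by $$W_{kj}:=\frac{(\mu_k-\lambda_j)^{-2}}{\sum_{i=1}^n(\mu_k-\lambda_i)^{-2}}.$$ Then each $\mu_k$ is a smooth function of $(\lambda_1,\dots,\lambda_n)$ on the set of strictly decreasing tuples, with $\partial\mu_k/\partial\lambda_j=W_{kj}>0$ for all $k,j$; moreover each row of $W$ sums to $1$, each column of $W$ sums to $\frac{n-1}{n}$, and $\mu_k=\sum_{j=1}^n W_{kj}\lambda_j$ for every $k=1,\dots,n-1$. *)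

theory Defs
  imports "HOL-Analysis.Analysis" "HOL-Computational_Algebra.Polynomial"
begin

text \<open>Coinductive, so that
all iterated partial derivatives exist.\<close>
coinductive smooth_on :: "'a::euclidean_space set \<Rightarrow> ('a \<Rightarrow> real) \<Rightarrow> bool" where
  "(\<forall>x\<in>S. (f has_derivative (\<lambda>h. \<Sum>b\<in>Basis. (h \<bullet> b) * g b x)) (at x))
   \<Longrightarrow> (\<forall>b\<in>Basis. smooth_on S (g b)) \<Longrightarrow> smooth_on S f"

text \<open>Tuples (lambda_j) indexed by a finite linearly ordered type 'n (so n = CARD('n)),
the j-th coordinate being the j-th element of 'n in its order.\<close>

definition decr_tuples :: "(real^'n::{finite,linorder}) set" where
  "decr_tuples = {x. \<forall>i j. i < j \<longrightarrow> x $ i > x $ j}"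

definition qpoly :: "real^'n::{finite,linorder} \<Rightarrow> real poly" where
  "qpoly x = (\<Prod>j\<in>UNIV. [:- (x $ j), 1:])"

definition crit_pts :: "real^'n::{finite,linorder} \<Rightarrow> real set" where
  "crit_pts x = {t. poly (pderiv (qpoly x)) t = 0}"

definition mu :: "real^'n::{finite,linorder} \<Rightarrow> nat \<Rightarrow> real" where
  "mu x k = rev (sorted_list_of_set (crit_pts x)) ! (k - 1)"

definition Wmat :: "real^'n::{finite,linorder} \<Rightarrow> nat \<Rightarrow> 'n \<Rightarrow> real" where
  "Wmat x k j = inverse ((mu x k - x $ j)^2) / (\<Sum>i\<in>UNIV. inverse ((mu x k - x $ i)^2))"

end

theory Submission
  imports Defs
begin


definition ee :: "nat \<Rightarrow> 'n::{finite,linorder}" where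
  "ee i = sorted_list_of_set (UNIV::'n set) ! i"

lemma ee_less: assumes "i < j" "j < CARD('n::{finite,linorder})" shows "(ee i :: 'n) < ee j"
proof -
  have "sorted_wrt (<) (sorted_list_of_set (UNIV::'n set))" by simp
  moreover have "length (sorted_list_of_set (UNIV::'n set)) = CARD('n)" by simp
  ultimately show ?thesis unfolding ee_def using sorted_wrt_nth_less[of "(<)" "sorted_list_of_set (UNIV::'n set)" i j] assms by simp
qed

lemma ee_surj: "\<exists>i<CARD('n::{finite,linorder}). ee i = (j::'n)"
proof -
  have "j \<in> set (sorted_list_of_set (UNIV::'n set))" by simp
  then obtain i where "i < length (sorted_list_of_set (UNIV::'n set))" "sorted_list_of_set (UNIV::'n set) ! i = j"
    by (metis in_set_conv_nth)
  then show ?thesis unfolding ee_def by (metis card_UNIV_length_enum length_sorted_list_of_set finite_class.finite_UNIV)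
qed

lemma ee_inj: "i < CARD('n::{finite,linorder}) \<Longrightarrow> j < CARD('n) \<Longrightarrow> (ee i :: 'n) = ee j \<Longrightarrow> i = j"
  using ee_less[of i j, where 'n='n] ee_less[of j i, where 'n='n] by (cases i j rule: linorder_cases) auto

lemma D_ord: "y \<in> decr_tuples \<Longrightarrow> i < j \<Longrightarrow> j < CARD('n::{finite,linorder}) \<Longrightarrow> y $ (ee i :: 'n) > y $ ee j"
  unfolding decr_tuples_def using ee_less[of i j] by auto

lemma D_ord_le: "y \<in> decr_tuples \<Longrightarrow> i \<le> j \<Longrightarrow> j < CARD('n::{finite,linorder}) \<Longrightarrow> y $ (ee i :: 'n) \<ge> y $ ee j"
  using D_ord[of y i j] by (cases "i = j") auto

lemma D_inj: "y \<in> decr_tuples \<Longrightarrow> y $ i = y $ j \<Longrightarrow> i = j"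
proof (rule ccontr)
  assume a: "y \<in> decr_tuples" "y $ i = y $ j" "i \<noteq> j"
  then have "i < j \<or> j < i" by auto
  then show False using a unfolding decr_tuples_def by force
qed

definition FF :: "real^'n::{finite,linorder} \<Rightarrow> real \<Rightarrow> real" where
  "FF y t = (\<Sum>j\<in>UNIV. inverse (t - y $ j))"

lemma poly_q: "poly (qpoly y) t = (\<Prod>j\<in>UNIV. t - y $ j)"
  unfolding qpoly_def by (simp add: poly_prod)

lemma poly_dq: "poly (pderiv (qpoly y)) t = (\<Sum>j\<in>UNIV. \<Prod>l\<in>UNIV-{j}. t - y $ l)"
  unfolding qpoly_def pderiv_prod by (simp add: poly_sum poly_prod pderiv_pCons)

lemma poly_dq_F: assumes "\<forall>j. t \<noteq> y $ j"
  shows "poly (pderiv (qpoly y)) t = poly (qpoly y) t * FF y t"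
proof -
  have "(\<Prod>l\<in>UNIV-{j}. t - y $ l) = (\<Prod>j\<in>UNIV. t - y $ j) * inverse (t - y $ j)" for j
    using assms prod.remove[of UNIV j "\<lambda>j. t - y $ j"] by (simp add: field_simps)
  then show ?thesis unfolding poly_dq poly_q FF_def by (simp add: sum_distrib_left)
qed

lemma poly_q_ne: "\<forall>j. t \<noteq> y $ j \<Longrightarrow> poly (qpoly y) t \<noteq> 0"
  unfolding poly_q by simp

lemma crit_iff_F: assumes "\<forall>j. t \<noteq> y $ j" shows "poly (pderiv (qpoly y)) t = 0 \<longleftrightarrow> FF y t = 0"
  using poly_dq_F[OF assms] poly_q_ne[OF assms] by simp

lemma dq_root_ne: assumes "y \<in> decr_tuples" shows "poly (pderiv (qpoly y)) (y $ j) \<noteq> 0"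
proof -
  have "(\<Sum>i\<in>UNIV. \<Prod>l\<in>UNIV-{i}. y $ j - y $ l) = (\<Prod>l\<in>UNIV-{j}. y $ j - y $ l)"
  proof -
    have "(\<Prod>l\<in>UNIV-{i}. y $ j - y $ l) = 0" if "i \<in> UNIV-{j}" for i
      using that by (auto simp: prod_zero_iff)
    then have "(\<Sum>i\<in>UNIV-{j}. \<Prod>l\<in>UNIV-{i}. y $ j - y $ l) = 0" by (intro sum.neutral) blast
    then show ?thesis using sum.remove[of UNIV j "\<lambda>i. \<Prod>l\<in>UNIV-{i}. y $ j - y $ l"] by simp
  qed
  moreover have "(\<Prod>l\<in>UNIV-{j}. y $ j - y $ l) \<noteq> 0"
    using D_inj[OF assms] by (auto simp: prod_zero_iff)
  ultimately show ?thesis unfolding poly_dq by simp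
qed



lemma F_pos: "\<forall>j. y $ j < t \<Longrightarrow> FF y t > 0"
  unfolding FF_def by (intro sum_pos) auto

lemma F_neg: "\<forall>j. y $ j > t \<Longrightarrow> FF y t < 0"
proof -
  assume a: "\<forall>j. y $ j > t"
  have "(\<Sum>j\<in>UNIV. inverse (t - y $ j)) < (\<Sum>j\<in>(UNIV::'a set). 0)"
    using a by (intro sum_strict_mono) auto
  then show ?thesis unfolding FF_def by simp
qed

lemma F_strict: assumes "a < b" "\<forall>j. (a - y $ j) * (b - y $ j) > 0" shows "FF y a > FF y b"
proof -
  have "inverse (b - y $ j) < inverse (a - y $ j)" for j
  proof -
    have "(a - y $ j) * (b - y $ j) > 0" using assms by auto
    then have "(a - y $ j > 0 \<and> b - y $ j > 0) \<or> (a - y $ j < 0 \<and> b - y $ j < 0)"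
      by (simp add: zero_less_mult_iff)
    then show ?thesis using assms(1)
      by (auto intro: less_imp_inverse_less less_imp_inverse_less_neg)
  qed
  then show ?thesis unfolding FF_def by (intro sum_strict_mono) auto
qed

definition in_gap :: "real^'n::{finite,linorder} \<Rightarrow> nat \<Rightarrow> real \<Rightarrow> bool" where
  "in_gap y k t \<longleftrightarrow> y $ (ee k :: 'n) < t \<and> t < y $ (ee (k - 1) :: 'n)"

lemma gap_sign:
  fixes y :: "real^'n::{finite,linorder}"
  assumes "y \<in> decr_tuples" "1 \<le> k" "k < CARD('n)" "in_gap y k t" "in_gap y k t'"
  shows "(t - y $ j) * (t' - y $ j) > 0"
proof -
  obtain i where i: "i < CARD('n)" "ee i = j" using ee_surj by blast
  show ?thesis
  proof (cases "i \<le> k - 1")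
    case True
    then have "y $ j \<ge> y $ ee (k - 1)" using D_ord_le[OF assms(1), of i "k-1"] i assms by auto
    then show ?thesis using assms(4,5) unfolding in_gap_def by (intro mult_neg_neg) auto
  next
    case False
    then have "y $ j \<le> y $ ee k" using D_ord_le[OF assms(1), of k i] i assms by auto
    then show ?thesis using assms(4,5) unfolding in_gap_def by (intro mult_pos_pos) auto
  qed
qed

lemma gap_not_root:
  fixes y :: "real^'n::{finite,linorder}"
  assumes "y \<in> decr_tuples" "1 \<le> k" "k < CARD('n)" "in_gap y k t"
  shows "\<forall>j. t \<noteq> y $ j"
proof
  fix j
  have "(t - y $ j) * (t - y $ j) > 0" using gap_sign[OF assms assms(4)] by blast
  then show "t \<noteq> y $ j" by auto
qed

lemma gap_unique:
  fixes y :: "real^'n::{finite,linorder}"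
  assumes "y \<in> decr_tuples" "1 \<le> k" "k < CARD('n)" "in_gap y k t" "in_gap y k t'"
    "poly (pderiv (qpoly y)) t = 0" "poly (pderiv (qpoly y)) t' = 0"
  shows "t = t'"
proof -
  have F: "FF y t = 0" "FF y t' = 0"
    using crit_iff_F gap_not_root assms by blast+
  show ?thesis
  proof (rule ccontr)
    assume "t \<noteq> t'"
    then consider "t < t'" | "t' < t" by linarith
    then show False
    proof cases
      case 1
      then show False using F_strict[OF 1, of y] gap_sign[OF assms(1-5)] F by auto
    next
      case 2
      then show False using F_strict[OF 2, of y] gap_sign[OF assms(1-3,5,4)] F by auto
    qed
  qed
qed

lemma gap_exists:
  fixes y :: "real^'n::{finite,linorder}"
  assumes "y \<in> decr_tuples" "1 \<le> k" "k < CARD('n)"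
  shows "\<exists>t. in_gap y k t \<and> poly (pderiv (qpoly y)) t = 0"
proof -
  let ?a = "y $ (ee k :: 'n)" and ?b = "y $ (ee (k-1) :: 'n)"
  have ab: "?a < ?b" using D_ord[OF assms(1), of "k-1" k] assms by auto
  have fa: "poly (qpoly y) ?a = 0" "poly (qpoly y) ?b = 0"
    unfolding poly_q by (auto simp: prod_zero_iff)
  have "\<exists>z. ?a < z \<and> z < ?b \<and> (\<lambda>v. poly (pderiv (qpoly y)) z * v) = (\<lambda>v. 0)"
  proof (rule Rolle_deriv[OF ab])
    show "poly (qpoly y) ?a = poly (qpoly y) ?b" using fa by simp
    show "continuous_on {?a..?b} (poly (qpoly y))"
      by (intro continuous_intros)
    show "(poly (qpoly y) has_derivative (\<lambda>v. poly (pderiv (qpoly y)) x * v)) (at x)" for x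
      using poly_DERIV[of "qpoly y" x] by (simp add: has_field_derivative_def)
  qed
  then obtain z where "?a < z" "z < ?b" "(\<lambda>v. poly (pderiv (qpoly y)) z * v) = (\<lambda>v. 0)" by blast
  then show ?thesis unfolding in_gap_def by (metis mult.right_neutral)
qed

lemma crit_classify:
  fixes y :: "real^'n::{finite,linorder}"
  assumes "y \<in> decr_tuples" "poly (pderiv (qpoly y)) t = 0"
  shows "\<exists>k. 1 \<le> k \<and> k < CARD('n) \<and> in_gap y k t"
proof -
  have nr: "\<forall>j. t \<noteq> y $ j" using dq_root_ne[OF assms(1)] assms(2) by metis
  then have F0: "FF y t = 0" using crit_iff_F assms(2) by blast
  have "\<exists>j. y $ j > t"
  proof (rule ccontr)
    assume "\<not> ?thesis"
    then have "\<forall>j. y $ j < t" using nr by (metis linorder_neqE_linordered_idom)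
    then show False using F_pos F0 by force
  qed
  then obtain j where j: "y $ j > t" by blast
  have "\<exists>j. y $ j < t"
  proof (rule ccontr)
    assume "\<not> ?thesis"
    then have "\<forall>j. y $ j > t" using nr by (metis linorder_neqE_linordered_idom)
    then show False using F_neg F0 by force
  qed
  then obtain j' where j': "y $ j' < t" by blast
  have n0: "0 < CARD('n)" by simp
  have top: "y $ (ee 0 :: 'n) > t"
  proof -
    obtain i where "i < CARD('n)" "ee i = j" using ee_surj by blast
    then show ?thesis using D_ord_le[OF assms(1), of 0 i] j by auto
  qed
  have bot: "y $ (ee (CARD('n) - 1) :: 'n) < t"
  proof -
    obtain i where i: "i < CARD('n)" "ee i = j'" using ee_surj by blast
    then have "i \<le> CARD('n) - 1" by linarith
    then show ?thesis using D_ord_le[OF assms(1), of i "CARD('n) - 1"] j' i by auto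
  qed
  define k where "k = (LEAST i. y $ (ee i :: 'n) < t)"
  have k1: "y $ (ee k :: 'n) < t" unfolding k_def by (rule LeastI[of _ "CARD('n) - 1"]) (rule bot)
  have k2: "k \<le> CARD('n) - 1" unfolding k_def by (rule Least_le) (rule bot)
  have k3: "k \<noteq> 0"
  proof
    assume "k = 0" then show False using k1 top by simp
  qed
  have k4: "\<not> y $ (ee (k-1) :: 'n) < t" unfolding k_def using k3 not_less_Least[of "k - 1" "\<lambda>i. y $ (ee i :: 'n) < t"]
    unfolding k_def[symmetric] by auto
  have "y $ (ee (k-1) :: 'n) \<noteq> t" using nr by metis
  then have "y $ (ee (k-1) :: 'n) > t" using k4 by linarith
  then show ?thesis using k1 k2 k3 unfolding in_gap_def
    by (intro exI[of _ k]) auto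
qed

definition zz :: "real^'n::{finite,linorder} \<Rightarrow> nat \<Rightarrow> real" where
  "zz y k = (THE t. in_gap y k t \<and> poly (pderiv (qpoly y)) t = 0)"

lemma zz_prop:
  fixes y :: "real^'n::{finite,linorder}"
  assumes "y \<in> decr_tuples" "1 \<le> k" "k < CARD('n)"
  shows "in_gap y k (zz y k) \<and> poly (pderiv (qpoly y)) (zz y k) = 0"
proof -
  have "\<exists>!t. in_gap y k t \<and> poly (pderiv (qpoly y)) t = 0"
    using gap_exists[OF assms] gap_unique[OF assms] by blast
  then show ?thesis unfolding zz_def by (rule theI')
qed

lemma zz_eq:
  fixes y :: "real^'n::{finite,linorder}"
  assumes "y \<in> decr_tuples" "1 \<le> k" "k < CARD('n)" "in_gap y k t" "poly (pderiv (qpoly y)) t = 0"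
  shows "zz y k = t"
  using zz_prop[OF assms(1-3)] gap_unique[OF assms(1-3)] assms(4,5) by blast

lemma crit_eq:
  fixes y :: "real^'n::{finite,linorder}"
  assumes "y \<in> decr_tuples"
  shows "crit_pts y = zz y ` {1..<CARD('n)}"
proof
  show "crit_pts y \<subseteq> zz y ` {1..<CARD('n)}"
  proof
    fix t assume "t \<in> crit_pts y"
    then have t: "poly (pderiv (qpoly y)) t = 0" unfolding crit_pts_def by simp
    obtain k where "1 \<le> k" "k < CARD('n)" "in_gap y k t" using crit_classify[OF assms t] by blast
    then show "t \<in> zz y ` {1..<CARD('n)}" using zz_eq[OF assms _ _ _ t] by force
  qed
  show "zz y ` {1..<CARD('n)} \<subseteq> crit_pts y"
    using zz_prop[OF assms] unfolding crit_pts_def by auto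
qed

lemma zz_decr:
  fixes y :: "real^'n::{finite,linorder}"
  assumes "y \<in> decr_tuples" "1 \<le> k" "k < k'" "k' < CARD('n)"
  shows "zz y k' < zz y k"
proof -
  have "zz y k' < y $ (ee (k'-1) :: 'n)" using zz_prop[OF assms(1), of k'] assms unfolding in_gap_def by auto
  also have "\<dots> \<le> y $ (ee k :: 'n)" using D_ord_le[OF assms(1), of k "k'-1"] assms by auto
  also have "\<dots> < zz y k" using zz_prop[OF assms(1), of k] assms unfolding in_gap_def by auto
  finally show ?thesis .
qed

lemma mu_eq:
  fixes y :: "real^'n::{finite,linorder}"
  assumes "y \<in> decr_tuples" "1 \<le> k" "k < CARD('n)"
  shows "mu y k = zz y k"
proof -
  define xs where "xs = map (zz y) [1..<CARD('n)]"
  have s1: "sorted_wrt (>) xs" unfolding xs_def sorted_wrt_iff_nth_less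
    using zz_decr[OF assms(1)] by auto
  have s2: "sorted_wrt (<) (rev xs)" using s1 by (simp add: sorted_wrt_rev)
  have set: "set (rev xs) = crit_pts y" unfolding crit_eq[OF assms(1)] xs_def by simp
  have "sorted_list_of_set (crit_pts y) = rev xs"
    using strict_sorted_equal[OF s2, of "sorted_list_of_set (crit_pts y)"] set
    by (metis List.finite_set sorted_list_of_set.set_sorted_key_list_of_set sorted_list_of_set.strict_sorted_key_list_of_set)
  then have "mu y k = xs ! (k - 1)" unfolding mu_def by simp
  also have "\<dots> = zz y k" unfolding xs_def using assms by (simp add: nth_map)
  finally show ?thesis .
qed



lemma mu_props:
  fixes x :: "real^'n::{finite,linorder}"
  assumes "x \<in> decr_tuples" "1 \<le> k" "k < CARD('n)"
  shows "\<forall>j. mu x k \<noteq> x $ j" "FF x (mu x k) = 0"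
proof -
  have z: "in_gap x k (zz x k)" "poly (pderiv (qpoly x)) (zz x k) = 0" using zz_prop[OF assms] by auto
  show nr: "\<forall>j. mu x k \<noteq> x $ j" using gap_not_root[OF assms z(1)] mu_eq[OF assms] by simp
  show "FF x (mu x k) = 0" using crit_iff_F[OF nr] z(2) mu_eq[OF assms] by simp
qed

lemma W_facts:
  fixes x :: "real^'n::{finite,linorder}"
  assumes "x \<in> decr_tuples" "1 \<le> k" "k < CARD('n)"
  shows "\<forall>j. Wmat x k j > 0" "(\<Sum>j\<in>UNIV. Wmat x k j) = 1"
    "mu x k = (\<Sum>j\<in>UNIV. Wmat x k j * x $ j)"
proof -
  note nr = mu_props(1)[OF assms] and F0 = mu_props(2)[OF assms]
  define m where "m = mu x k"
  define S where "S = (\<Sum>i\<in>UNIV. inverse ((m - x $ i)^2))"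
  have Spos: "S > 0" unfolding S_def using nr m_def by (intro sum_pos) auto
  have W: "Wmat x k j = inverse ((m - x $ j)^2) / S" for j unfolding Wmat_def S_def m_def by simp
  show "\<forall>j. Wmat x k j > 0" using Spos nr m_def by (auto simp: W)
  show "(\<Sum>j\<in>UNIV. Wmat x k j) = 1" using Spos unfolding W sum_divide_distrib[symmetric] S_def[symmetric] by simp
  have t: "inverse ((m - x $ j)^2) * x $ j = m * inverse ((m - x $ j)^2) - inverse (m - x $ j)" for j
  proof -
    have "m - x $ j \<noteq> 0" using nr m_def by auto
    then have e: "inverse ((m - x $ j)^2) * (m - x $ j) = inverse (m - x $ j)"
      by (simp add: power2_eq_square)
    have "inverse ((m - x $ j)^2) * x $ j = m * inverse ((m - x $ j)^2) - inverse ((m - x $ j)^2) * (m - x $ j)"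
      by (simp add: algebra_simps)
    then show ?thesis using e by simp
  qed
  have "(\<Sum>j\<in>UNIV. Wmat x k j * x $ j) = (\<Sum>j\<in>UNIV. inverse ((m - x $ j)^2) * x $ j) / S"
    unfolding W by (simp add: sum_divide_distrib)
  also have "\<dots> = (m * S - FF x m) / S" unfolding t S_def FF_def
    by (simp add: sum_subtractf sum_distrib_left)
  also have "\<dots> = m" using F0 Spos m_def by simp
  finally show "mu x k = (\<Sum>j\<in>UNIV. Wmat x k j * x $ j)" using m_def by simp
qed



lemma D_open: "open (decr_tuples :: (real^'n::{finite,linorder}) set)"
proof -
  have "(decr_tuples :: (real^('n::{finite,linorder})) set) = (\<Inter>p\<in>{p::('n::{finite,linorder})\<times>'n. fst p < snd p}. {x::real^('n::{finite,linorder}). x $ snd p < x $ fst p})"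
    by (auto simp: decr_tuples_def)
  moreover have "open (\<Inter>p\<in>{p::('n::{finite,linorder})\<times>'n. fst p < snd p}. {x::real^('n::{finite,linorder}). x $ snd p < x $ fst p})"
    by (intro open_INT) (auto intro!: open_Collect_less continuous_on_component continuous_on_id)
  ultimately show ?thesis by simp
qed

lemma carat:
  fixes f :: "real^'n::finite \<Rightarrow> real"
  assumes ev: "\<forall>\<^sub>F y in at x. f y - f x = (\<Sum>j\<in>UNIV. G j y * (y $ j - x $ j))"
    and lim: "\<And>j. (G j \<longlongrightarrow> c j) (at x)"
  shows "(f has_derivative (\<lambda>h. \<Sum>j\<in>UNIV. c j * h $ j)) (at x)"
  unfolding has_derivative_at_within
proof
  show "bounded_linear (\<lambda>h. \<Sum>j\<in>UNIV. c j * h $ j)"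
    by (intro bounded_linear_sum bounded_linear_const_mult bounded_linear_vec_nth)
  let ?g = "\<lambda>y. \<Sum>j\<in>UNIV. \<bar>G j y - c j\<bar>"
  have g0: "(?g \<longlongrightarrow> 0) (at x)"
  proof -
    have "(?g \<longlongrightarrow> (\<Sum>j\<in>(UNIV::'n set). \<bar>c j - c j\<bar>)) (at x)"
      by (intro tendsto_intros lim)
    then show ?thesis by simp
  qed
  show "((\<lambda>y. (f y - f x - (\<Sum>j\<in>UNIV. c j * (y - x) $ j)) /\<^sub>R norm (y - x)) \<longlongrightarrow> 0) (at x)"
  proof (rule Lim_null_comparison[OF _ g0])
    show "\<forall>\<^sub>F y in at x. norm ((f y - f x - (\<Sum>j\<in>UNIV. c j * (y - x) $ j)) /\<^sub>R norm (y - x)) \<le> ?g y"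
      using ev
    proof eventually_elim
      case (elim y)
      have e: "f y - f x - (\<Sum>j\<in>UNIV. c j * (y - x) $ j) = (\<Sum>j\<in>UNIV. (G j y - c j) * (y $ j - x $ j))"
      proof -
        have "(\<Sum>j\<in>UNIV. (G j y - c j) * (y $ j - x $ j)) = (\<Sum>j\<in>UNIV. G j y * (y $ j - x $ j)) - (\<Sum>j\<in>UNIV. c j * (y - x) $ j)"
          by (simp add: sum_subtractf[symmetric] left_diff_distrib)
        then show ?thesis using elim by simp
      qed
      have "\<bar>\<Sum>j\<in>UNIV. (G j y - c j) * (y $ j - x $ j)\<bar> \<le> (\<Sum>j\<in>UNIV. \<bar>G j y - c j\<bar> * norm (y - x))"
      proof -
        have "\<bar>\<Sum>j\<in>UNIV. (G j y - c j) * (y $ j - x $ j)\<bar> \<le> (\<Sum>j\<in>UNIV. \<bar>(G j y - c j) * (y $ j - x $ j)\<bar>)"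
          by (rule sum_abs)
        also have "\<dots> \<le> (\<Sum>j\<in>UNIV. \<bar>G j y - c j\<bar> * norm (y - x))"
        proof (rule sum_mono)
          fix j
          have "\<bar>y $ j - x $ j\<bar> \<le> norm (y - x)" using component_le_norm_cart[of "y - x" j] by simp
          then show "\<bar>(G j y - c j) * (y $ j - x $ j)\<bar> \<le> \<bar>G j y - c j\<bar> * norm (y - x)"
            by (simp add: abs_mult mult_left_mono)
        qed
        finally show ?thesis .
      qed
      then have "\<bar>\<Sum>j\<in>UNIV. (G j y - c j) * (y $ j - x $ j)\<bar> \<le> ?g y * norm (y - x)"
        by (simp add: sum_distrib_right)
      then show ?case unfolding e
      proof (cases "norm (y - x) = 0")
        case False
        then have p: "norm (y - x) > 0" by simp
        assume a: "\<bar>\<Sum>j\<in>UNIV. (G j y - c j) * (y $ j - x $ j)\<bar> \<le> ?g y * norm (y - x)"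
        have "norm ((\<Sum>j\<in>UNIV. (G j y - c j) * (y $ j - x $ j)) /\<^sub>R norm (y - x))
            = \<bar>\<Sum>j\<in>UNIV. (G j y - c j) * (y $ j - x $ j)\<bar> / norm (y - x)"
          using p by (simp add: divide_inverse_commute abs_mult)
        also have "\<dots> \<le> ?g y" using a p by (simp add: pos_divide_le_eq)
        finally show "norm ((\<Sum>j\<in>UNIV. (G j y - c j) * (y $ j - x $ j)) /\<^sub>R norm (y - x)) \<le> ?g y" .
      qed (auto intro: sum_nonneg)
    qed
  qed
qed



lemma FF_tendsto: "\<forall>j. t \<noteq> x $ j \<Longrightarrow> ((\<lambda>y. FF y t) \<longlongrightarrow> FF x t) (at x)"
  unfolding FF_def by (intro tendsto_intros) auto

lemma FF_cont_t: "\<forall>t\<in>{a..b}. \<forall>j. t \<noteq> y $ j \<Longrightarrow> continuous_on {a..b} (FF y)"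
  unfolding FF_def by (intro continuous_intros) auto

lemma zz_cont:
  fixes x :: "real^'n::{finite,linorder}"
  assumes x: "x \<in> decr_tuples" and k: "1 \<le> k" "k < CARD('n)"
  shows "((\<lambda>y. zz y k) \<longlongrightarrow> zz x k) (at x)"
  unfolding tendsto_iff
proof (intro allI impI)
  fix e :: real assume "e > 0"
  define m where "m = zz x k"
  define a where "a = x $ (ee k :: 'n)"
  define b where "b = x $ (ee (k-1) :: 'n)"
  have gx: "a < m" "m < b" "poly (pderiv (qpoly x)) m = 0"
    using zz_prop[OF x k] unfolding m_def a_def b_def in_gap_def by auto
  define e0 where "e0 = min (m - a) (b - m) / 2"
  have e0: "e0 > 0" "m - a \<ge> 2 * e0" "b - m \<ge> 2 * e0" using gx unfolding e0_def by auto
  define \<epsilon> where "\<epsilon> = min e e0"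
  have eps: "\<epsilon> > 0" "\<epsilon> \<le> e" "\<epsilon> \<le> e0" using e0 \<open>e > 0\<close> unfolding \<epsilon>_def by auto
  have gl: "in_gap x k (m - \<epsilon>)" and gr: "in_gap x k (m + \<epsilon>)" and gm: "in_gap x k m"
    using gx e0 eps unfolding in_gap_def a_def b_def by auto
  have Fm: "FF x m = 0" using crit_iff_F[OF gap_not_root[OF x k gm]] gx by simp
  have Fl: "FF x (m - \<epsilon>) > 0"
    using F_strict[of "m - \<epsilon>" m x] gap_sign[OF x k gl gm] eps Fm by auto
  have Fr: "FF x (m + \<epsilon>) < 0"
    using F_strict[of m "m + \<epsilon>" x] gap_sign[OF x k gm gr] eps Fm by auto
  have ev1: "\<forall>\<^sub>F y in at x. y \<in> decr_tuples" using eventually_at_in_open'[OF D_open x] .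
  have ev2: "\<forall>\<^sub>F y in at x. FF y (m - \<epsilon>) > 0"
    using order_tendstoD(1)[OF FF_tendsto[OF gap_not_root[OF x k gl]] Fl] .
  have ev3: "\<forall>\<^sub>F y in at x. FF y (m + \<epsilon>) < 0"
    using order_tendstoD(2)[OF FF_tendsto[OF gap_not_root[OF x k gr]] Fr] .
  have ev4: "\<forall>\<^sub>F y in at x. y $ (ee k :: 'n) < a + e0"
  proof -
    have "((\<lambda>y. y $ (ee k :: 'n)) \<longlongrightarrow> a) (at x)" unfolding a_def by (intro tendsto_intros)
    then show ?thesis using order_tendstoD(2) e0 by force
  qed
  have ev5: "\<forall>\<^sub>F y in at x. y $ (ee (k-1) :: 'n) > b - e0"
  proof -
    have "((\<lambda>y. y $ (ee (k-1) :: 'n)) \<longlongrightarrow> b) (at x)" unfolding b_def by (intro tendsto_intros)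
    then show ?thesis using order_tendstoD(1) e0 by force
  qed
  show "\<forall>\<^sub>F y in at x. dist (zz y k) (zz x k) < e"
    using ev1 ev2 ev3 ev4 ev5
  proof eventually_elim
    case (elim y)
    have ing: "in_gap y k t" if "m - \<epsilon> \<le> t" "t \<le> m + \<epsilon>" for t
      using elim that e0 eps unfolding in_gap_def by auto
    have cont: "continuous_on {m - \<epsilon>..m + \<epsilon>} (FF y)"
      using gap_not_root[OF elim(1) k ing] by (intro FF_cont_t) auto
    obtain t where t: "m - \<epsilon> \<le> t" "t \<le> m + \<epsilon>" "FF y t = 0"
      using IVT2'[of "FF y" "m + \<epsilon>" 0 "m - \<epsilon>", OF _ _ _ cont] elim eps by auto
    have "poly (pderiv (qpoly y)) t = 0"
      using crit_iff_F[OF gap_not_root[OF elim(1) k ing[OF t(1,2)]]] t by simp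
    then have "zz y k = t" using zz_eq[OF elim(1) k ing[OF t(1,2)]] by simp
    moreover have "t \<noteq> m - \<epsilon>" "t \<noteq> m + \<epsilon>" using t elim by auto
    ultimately show ?case using t eps unfolding m_def dist_real_def by auto
  qed
qed



lemma mu_deriv:
  fixes x :: "real^'n::{finite,linorder}"
  assumes x: "x \<in> decr_tuples" and k: "1 \<le> k" "k < CARD('n)"
  shows "((\<lambda>y. mu y k) has_derivative (\<lambda>h. \<Sum>j\<in>UNIV. Wmat x k j * h $ j)) (at x)"
proof -
  define m where "m = zz x k"
  have mm: "mu x k = m" using mu_eq[OF x k] m_def by simp
  have nrx: "\<forall>j. m \<noteq> x $ j" using mu_props(1)[OF x k] mm by simp
  have Fx: "FF x m = 0" using mu_props(2)[OF x k] mm by simp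
  define P where "P j y = (m - x $ j) * (zz y k - y $ j)" for j y
  define w where "w j y = inverse (P j y) / (\<Sum>i\<in>UNIV. inverse (P i y))" for j y
  define S where "S = (\<Sum>i\<in>UNIV. inverse ((m - x $ i) * (m - x $ i)))"
  have sq: "inverse ((m - x $ i) * (m - x $ i)) > 0" for i
  proof -
    have d: "m - x $ i \<noteq> 0" using nrx by auto
    have "(m - x $ i) * (m - x $ i) > 0"
    proof (cases "m - x $ i > 0")
      case True then show ?thesis by (intro mult_pos_pos)
    next
      case False then have "m - x $ i < 0" using d by linarith
      then show ?thesis by (intro mult_neg_neg)
    qed
    then show ?thesis by (rule positive_imp_inverse_positive)
  qed
  have Spos: "S > 0" unfolding S_def using sq by (intro sum_pos) auto
  have zc: "((\<lambda>y. zz y k) \<longlongrightarrow> m) (at x)" using zz_cont[OF x k] m_def by simp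
  have Plim: "((\<lambda>y. P j y) \<longlongrightarrow> (m - x $ j) * (m - x $ j)) (at x)" for j
    unfolding P_def by (intro tendsto_intros zc)
  have Slim: "((\<lambda>y. \<Sum>i\<in>UNIV. inverse (P i y)) \<longlongrightarrow> S) (at x)"
    unfolding S_def using nrx by (intro tendsto_intros Plim) auto
  have wlim: "(w j \<longlongrightarrow> Wmat x k j) (at x)" for j
  proof -
    have "(w j \<longlongrightarrow> inverse ((m - x $ j) * (m - x $ j)) / S) (at x)"
      unfolding w_def using nrx Spos by (intro tendsto_intros Plim Slim) auto
    moreover have "inverse ((m - x $ j) * (m - x $ j)) / S = Wmat x k j"
      unfolding Wmat_def mm S_def by (simp add: power2_eq_square)
    ultimately show ?thesis by simp
  qed
  have ev1: "\<forall>\<^sub>F y in at x. y \<in> decr_tuples" using eventually_at_in_open'[OF D_open x] .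
  have ev2: "\<forall>\<^sub>F y in at x. (\<Sum>i\<in>UNIV. inverse (P i y)) > 0"
    using order_tendstoD(1)[OF Slim Spos] .
  have ev: "\<forall>\<^sub>F y in at x. zz y k - zz x k = (\<Sum>j\<in>UNIV. w j y * (y $ j - x $ j))"
    using ev1 ev2
  proof eventually_elim
    case (elim y)
    define z where "z = zz y k"
    have zp: "in_gap y k z" "poly (pderiv (qpoly y)) z = 0" using zz_prop[OF elim(1) k] z_def by auto
    have nry: "\<forall>j. z \<noteq> y $ j" using gap_not_root[OF elim(1) k zp(1)] .
    have Fy: "FF y z = 0" using crit_iff_F[OF nry] zp(2) by simp
    have trm: "inverse (z - y $ j) - inverse (m - x $ j) = ((y $ j - x $ j) - (z - m)) * inverse (P j y)" for j
    proof -
      have "z - y $ j \<noteq> 0" "m - x $ j \<noteq> 0" using nry nrx by auto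
      then show ?thesis unfolding P_def z_def[symmetric] by (simp add: field_simps)
    qed
    have "0 = FF y z - FF x m" using Fy Fx by simp
    also have "\<dots> = (\<Sum>j\<in>UNIV. inverse (z - y $ j) - inverse (m - x $ j))"
      unfolding FF_def by (simp add: sum_subtractf)
    also have "\<dots> = (\<Sum>j\<in>UNIV. (y $ j - x $ j) * inverse (P j y)) - (z - m) * (\<Sum>j\<in>UNIV. inverse (P j y))"
      unfolding trm by (simp add: left_diff_distrib sum_subtractf sum_distrib_left)
    finally have "(z - m) * (\<Sum>j\<in>UNIV. inverse (P j y)) = (\<Sum>j\<in>UNIV. (y $ j - x $ j) * inverse (P j y))"
      by simp
    then have "z - m = (\<Sum>j\<in>UNIV. (y $ j - x $ j) * inverse (P j y)) / (\<Sum>j\<in>UNIV. inverse (P j y))"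
      using elim(2) by (simp add: field_simps)
    also have "\<dots> = (\<Sum>j\<in>UNIV. w j y * (y $ j - x $ j))"
      unfolding w_def by (simp add: sum_divide_distrib mult.commute)
    finally show ?case unfolding z_def m_def .
  qed
  have "((\<lambda>y. zz y k) has_derivative (\<lambda>h. \<Sum>j\<in>UNIV. Wmat x k j * h $ j)) (at x)"
    by (rule carat[OF ev wlim])
  then show ?thesis
    by (rule has_derivative_transform_within_open[OF _ D_open x]) (simp add: mu_eq[OF _ k])
qed



lemma lin_mult: "[:-(c::real), 1:] * P = smult (-c) P + pCons 0 P"
  by (simp add: mult_pCons_left)

lemma lin_prod:
  fixes c :: "'a \<Rightarrow> real"
  assumes "finite A"
  shows "degree (\<Prod>i\<in>A. [:-c i, 1:]) = card A \<and> coeff (\<Prod>i\<in>A. [:-c i, 1:]) (card A) = 1 \<and>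
    (A \<noteq> {} \<longrightarrow> coeff (\<Prod>i\<in>A. [:-c i, 1:]) (card A - 1) = - (\<Sum>i\<in>A. c i))"
  using assms
proof (induction A rule: finite_induct)
  case empty
  then show ?case by simp
next
  case (insert a A)
  define P where "P = (\<Prod>i\<in>A. [:-c i, 1:])"
  have IH: "degree P = card A" "coeff P (card A) = 1" "A \<noteq> {} \<Longrightarrow> coeff P (card A - 1) = - (\<Sum>i\<in>A. c i)"
    using insert.IH unfolding P_def by auto
  have Pnz: "P \<noteq> 0" using IH(2) by auto
  have eq: "(\<Prod>i\<in>insert a A. [:-c i, 1:]) = [:-c a, 1:] * P"
    unfolding P_def using insert by simp
  have ci: "card (insert a A) = Suc (card A)" using insert by simp
  have deg: "degree ([:-c a, 1:] * P) = Suc (card A)"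
    using Pnz IH(1) by (subst degree_mult_eq) auto
  have c1: "coeff ([:-c a, 1:] * P) (Suc (card A)) = 1"
    unfolding lin_mult using IH(1,2) by (simp add: coeff_eq_0)
  have c2: "coeff ([:-c a, 1:] * P) (card A) = - (\<Sum>i\<in>insert a A. c i)"
  proof (cases "A = {}")
    case True
    then have "P = 1" unfolding P_def by simp
    then show ?thesis unfolding lin_mult using True by simp
  next
    case False
    then have "card A \<noteq> 0" using insert by simp
    then obtain N where N: "card A = Suc N" by (cases "card A") auto
    show ?thesis unfolding lin_mult using IH(2) IH(3)[OF False] N insert by simp
  qed
  show ?case unfolding eq ci using deg c1 c2 by simp
qed

lemma vieta:
  fixes y :: "real^'n::{finite,linorder}"
  assumes y: "y \<in> decr_tuples" and n2: "CARD('n) \<ge> 2"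
  shows "(\<Sum>k\<in>{1..<CARD('n)}. zz y k) = real (CARD('n) - 1) / real (CARD('n)) * (\<Sum>j\<in>UNIV. y $ j)"
proof -
  define n where "n = CARD('n)"
  have n2': "n \<ge> 2" using n2 n_def by simp
  define q where "q = qpoly y"
  define P where "P = (\<Prod>k\<in>{1..<n}. [:- zz y k, 1:])"
  have qf: "degree q = n" "coeff q n = 1" "coeff q (n - 1) = - (\<Sum>j\<in>UNIV. y $ j)"
    using lin_prod[of "UNIV::'n set" "\<lambda>j. y $ j"] unfolding q_def qpoly_def n_def by auto
  have Pf: "degree P = n - 1" "coeff P (n - 1) = 1" "coeff P (n - 2) = - (\<Sum>k\<in>{1..<n}. zz y k)"
    using lin_prod[of "{1..<n}" "zz y"] n2' unfolding P_def by (auto simp: numeral_2_eq_2)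
  define r where "r = pderiv q - smult (of_nat n) P"
  have rc: "coeff r i = 0" if "i > n - 2" for i
  proof (cases "i = n - 1")
    case True
    then have "Suc i = n" using n2' by simp
    then show ?thesis unfolding r_def using True qf Pf by (simp add: coeff_pderiv)
  next
    case False
    then have "i > n - 1" "Suc i > n" using that n2' by auto
    then show ?thesis unfolding r_def using qf Pf by (simp add: coeff_pderiv coeff_eq_0)
  qed
  have rdeg: "degree r \<le> n - 2" by (rule degree_le) (use rc in auto)
  have zroot: "poly r (zz y k) = 0" if "k \<in> {1..<n}" for k
  proof -
    have "poly (pderiv q) (zz y k) = 0" using zz_prop[OF y, of k] that unfolding q_def n_def by auto
    moreover have "poly P (zz y k) = 0" unfolding P_def poly_prod using that
      by (auto simp: prod_zero_iff)
    ultimately show ?thesis unfolding r_def by simp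
  qed
  have r0: "r = 0"
  proof (rule ccontr)
    assume "r \<noteq> 0"
    then have fin: "finite {x. poly r x = 0}" and cb: "card {x. poly r x = 0} \<le> degree r"
      using poly_roots_finite card_poly_roots_bound by auto
    have inj: "inj_on (zz y) {1..<n}"
    proof (rule inj_onI)
      fix k k' assume "k \<in> {1..<n}" "k' \<in> {1..<n}" "zz y k = zz y k'"
      then show "k = k'" using zz_decr[OF y, of k k'] zz_decr[OF y, of k' k] unfolding n_def
        by (cases k k' rule: linorder_cases) auto
    qed
    have "zz y ` {1..<n} \<subseteq> {x. poly r x = 0}" using zroot by auto
    then have "card (zz y ` {1..<n}) \<le> card {x. poly r x = 0}" using fin by (rule card_mono[rotated])
    then have "n - 1 \<le> degree r" using card_image[OF inj] cb by simp
    then show False using rdeg n2' by simp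
  qed
  have "coeff (pderiv q) (n - 2) = coeff (smult (of_nat n) P) (n - 2)"
    using r0 unfolding r_def by simp
  moreover have "Suc (n - 2) = n - 1" using n2' by simp
  ultimately have "real (n - 1) * (- (\<Sum>j\<in>UNIV. y $ j)) = real n * (- (\<Sum>k\<in>{1..<n}. zz y k))"
    using qf Pf by (simp add: coeff_pderiv)
  then show ?thesis unfolding n_def[symmetric] using n2' by (simp add: field_simps)
qed



lemma colsum:
  fixes x :: "real^'n::{finite,linorder}"
  assumes x: "x \<in> decr_tuples" and n2: "CARD('n) \<ge> 2"
  shows "(\<Sum>k\<in>{1..<CARD('n)}. Wmat x k j) = real (CARD('n) - 1) / real (CARD('n))"
proof -
  define c where "c = real (CARD('n) - 1) / real (CARD('n))"
  define Lf where "Lf = (\<lambda>h::real^('n::{finite,linorder}). \<Sum>k\<in>{1..<CARD('n)}. \<Sum>i\<in>UNIV. Wmat x k i * h $ i)"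
  define Lg where "Lg = (\<lambda>h::real^('n::{finite,linorder}). c * (\<Sum>i\<in>UNIV. h $ i))"
  have df: "((\<lambda>y. \<Sum>k\<in>{1..<CARD('n)}. mu y k) has_derivative Lf) (at x)"
    unfolding Lf_def by (intro has_derivative_sum mu_deriv[OF x]) auto
  have "((\<lambda>y::real^('n::{finite,linorder}). c * (\<Sum>i\<in>UNIV. y $ i)) has_derivative Lg) (at x)"
    unfolding Lg_def
    by (intro bounded_linear_imp_has_derivative bounded_linear_const_mult bounded_linear_sum bounded_linear_vec_nth)
  then have dg: "((\<lambda>y. \<Sum>k\<in>{1..<CARD('n)}. mu y k) has_derivative Lg) (at x)"
  proof (rule has_derivative_transform_within_open[OF _ D_open x])
    fix y :: "real^('n::{finite,linorder})" assume y: "y \<in> decr_tuples"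
    have "(\<Sum>k\<in>{1..<CARD('n)}. mu y k) = (\<Sum>k\<in>{1..<CARD('n)}. zz y k)"
      using mu_eq[OF y] by (intro sum.cong) auto
    then show "c * (\<Sum>i\<in>UNIV. y $ i) = (\<Sum>k\<in>{1..<CARD('n)}. mu y k)"
      using vieta[OF y n2] unfolding c_def by simp
  qed
  have "Lf = Lg" using has_derivative_unique[OF df dg] .
  then have "Lf (axis j 1) = Lg (axis j 1)" by simp
  moreover have "Lf (axis j 1) = (\<Sum>k\<in>{1..<CARD('n)}. Wmat x k j)"
    unfolding Lf_def by (simp add: axis_def if_distrib cong: if_cong)
  moreover have "Lg (axis j 1) = c"
    unfolding Lg_def by (simp add: axis_def)
  ultimately show ?thesis unfolding c_def by simp
qed



inductive salg :: "'a::euclidean_space set \<Rightarrow> ('a \<Rightarrow> real) set \<Rightarrow> ('a \<Rightarrow> real) \<Rightarrow> bool"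
  for S G where
  gen: "f \<in> G \<Longrightarrow> salg S G f"
| cst: "salg S G (\<lambda>x. c)"
| lin: "salg S G (\<lambda>x. x \<bullet> v)"
| add: "salg S G f \<Longrightarrow> salg S G g \<Longrightarrow> salg S G (\<lambda>x. f x + g x)"
| mul: "salg S G f \<Longrightarrow> salg S G g \<Longrightarrow> salg S G (\<lambda>x. f x * g x)"
| inv: "salg S G f \<Longrightarrow> \<forall>x\<in>S. f x \<noteq> 0 \<Longrightarrow> salg S G (\<lambda>x. inverse (f x))"

lemma salg_cong: "salg S G f \<Longrightarrow> (\<And>x. f x = g x) \<Longrightarrow> salg S G g"
proof -
  assume "salg S G f" "\<And>x. f x = g x"
  moreover have "f = g" using \<open>\<And>x. f x = g x\<close> by auto
  ultimately show ?thesis by simp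
qed

lemma salg_sum: "finite A \<Longrightarrow> (\<forall>a\<in>A. salg S G (f a)) \<Longrightarrow> salg S G (\<lambda>x. \<Sum>a\<in>A. f a x)"
proof (induction A rule: finite_induct)
  case empty
  then show ?case using salg.cst[of S G 0] by simp
next
  case (insert a A)
  then show ?case using salg.add[of S G "f a" "\<lambda>x. \<Sum>a\<in>A. f a x"] by simp
qed

definition hasd :: "'a::euclidean_space set \<Rightarrow> ('a \<Rightarrow> real) \<Rightarrow> ('a \<Rightarrow> 'a \<Rightarrow> real) \<Rightarrow> bool" where
  "hasd S f g \<longleftrightarrow> (\<forall>x\<in>S. (f has_derivative (\<lambda>h. \<Sum>b\<in>Basis. (h \<bullet> b) * g b x)) (at x))"

lemma salg_deriv:
  assumes genD: "\<forall>f\<in>G. \<exists>g. hasd S f g \<and> (\<forall>b\<in>Basis. salg S G (g b))"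
  shows "salg S G f \<Longrightarrow> \<exists>g. hasd S f g \<and> (\<forall>b\<in>Basis. salg S G (g b))"
proof (induction rule: salg.induct)
  case (gen f)
  then show ?case using genD by blast
next
  case (cst c)
  have "hasd S (\<lambda>x. c) (\<lambda>b x. 0)" unfolding hasd_def
  proof
    fix x :: 'a
    show "((\<lambda>x. c) has_derivative (\<lambda>h. \<Sum>b\<in>Basis. (h \<bullet> b) * 0)) (at x)"
      by (rule has_derivative_eq_rhs[OF has_derivative_const]) simp
  qed
  moreover have "\<forall>b\<in>Basis. salg S G (\<lambda>x. 0)" by (auto intro: salg.cst)
  ultimately show ?case by blast
next
  case (lin v)
  have "hasd S (\<lambda>x. x \<bullet> v) (\<lambda>b x. b \<bullet> v)" unfolding hasd_def
  proof (intro ballI has_derivative_eq_rhs[OF bounded_linear_imp_has_derivative])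
    show "bounded_linear (\<lambda>x. x \<bullet> v)" by (rule bounded_linear_inner_left)
    show "(\<lambda>x. x \<bullet> v) = (\<lambda>h. \<Sum>b\<in>Basis. h \<bullet> b * (b \<bullet> v))"
    proof
      fix h :: 'a
      show "h \<bullet> v = (\<Sum>b\<in>Basis. h \<bullet> b * (b \<bullet> v))"
        using euclidean_inner[of h v] by (simp only: inner_commute[of v])
    qed
  qed
  moreover have "\<forall>b\<in>Basis. salg S G (\<lambda>x. b \<bullet> v)" by (auto intro: salg.cst)
  ultimately show ?case by blast
next
  case (add f g)
  obtain g1 where g1: "hasd S f g1" "\<forall>b\<in>Basis. salg S G (g1 b)" using add.IH by blast
  obtain g2 where g2: "hasd S g g2" "\<forall>b\<in>Basis. salg S G (g2 b)" using add.IH by blast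
  have "hasd S (\<lambda>x. f x + g x) (\<lambda>b x. g1 b x + g2 b x)"
    unfolding hasd_def
  proof
    fix x assume x: "x \<in> S"
    have "((\<lambda>x. f x + g x) has_derivative
      (\<lambda>h. (\<Sum>b\<in>Basis. (h \<bullet> b) * g1 b x) + (\<Sum>b\<in>Basis. (h \<bullet> b) * g2 b x))) (at x)"
      using g1(1) g2(1) x unfolding hasd_def by (intro has_derivative_add) auto
    then show "((\<lambda>x. f x + g x) has_derivative (\<lambda>h. \<Sum>b\<in>Basis. (h \<bullet> b) * (g1 b x + g2 b x))) (at x)"
      by (rule has_derivative_eq_rhs) (simp add: fun_eq_iff distrib_left sum.distrib)
  qed
  moreover have "\<forall>b\<in>Basis. salg S G (\<lambda>x. g1 b x + g2 b x)" using g1(2) g2(2) by (auto intro: salg.add)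
  ultimately show ?case by blast
next
  case (mul f g)
  obtain g1 where g1: "hasd S f g1" "\<forall>b\<in>Basis. salg S G (g1 b)" using mul.IH by blast
  obtain g2 where g2: "hasd S g g2" "\<forall>b\<in>Basis. salg S G (g2 b)" using mul.IH by blast
  have "hasd S (\<lambda>x. f x * g x) (\<lambda>b x. f x * g2 b x + g1 b x * g x)"
    unfolding hasd_def
  proof
    fix x assume x: "x \<in> S"
    have "((\<lambda>x. f x * g x) has_derivative
      (\<lambda>h. f x * (\<Sum>b\<in>Basis. (h \<bullet> b) * g2 b x) + (\<Sum>b\<in>Basis. (h \<bullet> b) * g1 b x) * g x)) (at x)"
      using g1(1) g2(1) x unfolding hasd_def by (intro has_derivative_mult) auto
    then show "((\<lambda>x. f x * g x) has_derivative (\<lambda>h. \<Sum>b\<in>Basis. (h \<bullet> b) * (f x * g2 b x + g1 b x * g x))) (at x)"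
    proof (rule has_derivative_eq_rhs)
      show "(\<lambda>h. f x * (\<Sum>b\<in>Basis. (h \<bullet> b) * g2 b x) + (\<Sum>b\<in>Basis. (h \<bullet> b) * g1 b x) * g x) =
        (\<lambda>h. \<Sum>b\<in>Basis. (h \<bullet> b) * (f x * g2 b x + g1 b x * g x))"
      proof
        fix h :: 'a
        have "(\<Sum>b\<in>Basis. (h \<bullet> b) * (f x * g2 b x + g1 b x * g x)) =
            (\<Sum>b\<in>Basis. f x * ((h \<bullet> b) * g2 b x) + ((h \<bullet> b) * g1 b x) * g x)"
          by (intro sum.cong) (auto simp: algebra_simps)
        also have "\<dots> = f x * (\<Sum>b\<in>Basis. (h \<bullet> b) * g2 b x) + (\<Sum>b\<in>Basis. (h \<bullet> b) * g1 b x) * g x"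
          by (simp only: sum.distrib sum_distrib_left sum_distrib_right)
        finally show "f x * (\<Sum>b\<in>Basis. (h \<bullet> b) * g2 b x) + (\<Sum>b\<in>Basis. (h \<bullet> b) * g1 b x) * g x =
            (\<Sum>b\<in>Basis. (h \<bullet> b) * (f x * g2 b x + g1 b x * g x))" by simp
      qed
    qed
  qed
  moreover have "\<forall>b\<in>Basis. salg S G (\<lambda>x. f x * g2 b x + g1 b x * g x)"
    using g1(2) g2(2) mul.hyps by (auto intro!: salg.add salg.mul)
  ultimately show ?case by blast
next
  case (inv f)
  obtain g1 where g1: "hasd S f g1" "\<forall>b\<in>Basis. salg S G (g1 b)" using inv.IH by blast
  have "hasd S (\<lambda>x. inverse (f x)) (\<lambda>b x. (-1) * (inverse (f x) * g1 b x * inverse (f x)))"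
    unfolding hasd_def
  proof
    fix x assume x: "x \<in> S"
    have "((\<lambda>x. inverse (f x)) has_derivative
      (\<lambda>h. - (inverse (f x) * (\<Sum>b\<in>Basis. (h \<bullet> b) * g1 b x) * inverse (f x)))) (at x)"
      using g1(1) x inv.hyps unfolding hasd_def by (intro Deriv.has_derivative_inverse) auto
    then show "((\<lambda>x. inverse (f x)) has_derivative (\<lambda>h. \<Sum>b\<in>Basis. (h \<bullet> b) * ((-1) * (inverse (f x) * g1 b x * inverse (f x))))) (at x)"
    proof (rule has_derivative_eq_rhs)
      show "(\<lambda>h. - (inverse (f x) * (\<Sum>b\<in>Basis. (h \<bullet> b) * g1 b x) * inverse (f x))) =
        (\<lambda>h. \<Sum>b\<in>Basis. (h \<bullet> b) * ((-1) * (inverse (f x) * g1 b x * inverse (f x))))"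
      proof
        fix h :: 'a
        have "(\<Sum>b\<in>Basis. (h \<bullet> b) * ((-1) * (inverse (f x) * g1 b x * inverse (f x)))) =
            (\<Sum>b\<in>Basis. (- (inverse (f x) * inverse (f x))) * ((h \<bullet> b) * g1 b x))"
          by (intro sum.cong) (auto simp: algebra_simps)
        also have "\<dots> = (- (inverse (f x) * inverse (f x))) * (\<Sum>b\<in>Basis. (h \<bullet> b) * g1 b x)"
          by (simp only: sum_distrib_left)
        finally show "- (inverse (f x) * (\<Sum>b\<in>Basis. (h \<bullet> b) * g1 b x) * inverse (f x)) =
            (\<Sum>b\<in>Basis. (h \<bullet> b) * ((-1) * (inverse (f x) * g1 b x * inverse (f x))))"
          by (simp add: algebra_simps)
      qed
    qed
  qed
  moreover have "\<forall>b\<in>Basis. salg S G (\<lambda>x. (-1) * (inverse (f x) * g1 b x * inverse (f x)))"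
  proof
    fix b :: 'a assume b: "b \<in> Basis"
    have i: "salg S G (\<lambda>x. inverse (f x))" using inv.hyps by (rule salg.inv)
    have gb: "salg S G (g1 b)" using g1(2) b by blast
    have "salg S G (\<lambda>x. inverse (f x) * g1 b x)" using salg.mul[OF i gb] .
    then have "salg S G (\<lambda>x. inverse (f x) * g1 b x * inverse (f x))" using salg.mul[OF _ i] by blast
    then show "salg S G (\<lambda>x. (-1) * (inverse (f x) * g1 b x * inverse (f x)))"
      using salg.mul[OF salg.cst[of S G "-1"]] by blast
  qed
  ultimately show ?case by blast
qed

lemma salg_smooth:
  assumes genD: "\<forall>f\<in>G. \<exists>g. hasd S f g \<and> (\<forall>b\<in>Basis. salg S G (g b))"
    and f: "salg S G f"
  shows "smooth_on S f"
  using f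
proof (coinduction arbitrary: f rule: smooth_on.coinduct)
  case (smooth_on f)
  then obtain g where "hasd S f g" "\<forall>b\<in>Basis. salg S G (g b)" using salg_deriv[OF genD] by blast
  then show ?case unfolding hasd_def by blast
qed



lemma vec_comp_rep: "(h::real^'n::finite) $ j = (\<Sum>b\<in>Basis. (h \<bullet> b) * (b $ j))"
proof -
  have "h $ j = h \<bullet> axis j 1" by (rule cart_eq_inner_axis)
  also have "\<dots> = (\<Sum>b\<in>Basis. (h \<bullet> b) * (axis j 1 \<bullet> b))" by (rule euclidean_inner)
  also have "\<dots> = (\<Sum>b\<in>Basis. (h \<bullet> b) * (b $ j))"
  proof (intro sum.cong refl)
    fix b :: "real^'n"
    have "axis j 1 \<bullet> b = b $ j" by (metis cart_eq_inner_axis inner_commute)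
    then show "(h \<bullet> b) * (axis j 1 \<bullet> b) = (h \<bullet> b) * (b $ j)" by simp
  qed
  finally show ?thesis .
qed

lemma mu_smooth:
  fixes k :: nat
  assumes k: "k \<in> {1..<CARD('n)}"
  shows "smooth_on (decr_tuples :: (real^('n::{finite,linorder})) set) (\<lambda>y. mu y k)"
proof -
  define S where "S = (decr_tuples :: (real^('n::{finite,linorder})) set)"
  define G where "G = {f. \<exists>k\<in>{1..<CARD('n)}. f = (\<lambda>y::real^('n::{finite,linorder}). mu y k)}"
  have genD: "\<forall>f\<in>G. \<exists>g. hasd S f g \<and> (\<forall>b\<in>Basis. salg S G (g b))"
  proof
    fix f assume "f \<in> G"
    then obtain k where k: "k \<in> {1..<CARD('n)}" and f: "f = (\<lambda>y. mu y k)" unfolding G_def by blast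
    define g where "g b y = (\<Sum>j\<in>UNIV. b $ j * Wmat y k j)" for b y :: "real^('n::{finite,linorder})"
    have "hasd S f g" unfolding hasd_def
    proof
      fix x assume x: "x \<in> S"
      have d: "((\<lambda>y. mu y k) has_derivative (\<lambda>h. \<Sum>j\<in>UNIV. Wmat x k j * h $ j)) (at x)"
        using mu_deriv[of x k] x k unfolding S_def by auto
      show "(f has_derivative (\<lambda>h. \<Sum>b\<in>Basis. (h \<bullet> b) * g b x)) (at x)"
        unfolding f
      proof (rule has_derivative_eq_rhs[OF d])
        show "(\<lambda>h. \<Sum>j\<in>UNIV. Wmat x k j * h $ j) = (\<lambda>h. \<Sum>b\<in>Basis. (h \<bullet> b) * g b x)"
        proof
          fix h :: "real^('n::{finite,linorder})"
          have "(\<Sum>j\<in>UNIV. Wmat x k j * h $ j) = (\<Sum>j\<in>UNIV. Wmat x k j * (\<Sum>b\<in>Basis. (h \<bullet> b) * (b $ j)))"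
            by (subst vec_comp_rep) (rule refl)
          also have "\<dots> = (\<Sum>j\<in>UNIV. \<Sum>b\<in>Basis. (h \<bullet> b) * (b $ j * Wmat x k j))"
            by (simp add: sum_distrib_left ac_simps)
          also have "\<dots> = (\<Sum>b\<in>Basis. \<Sum>j\<in>UNIV. (h \<bullet> b) * (b $ j * Wmat x k j))"
            by (rule sum.swap)
          also have "\<dots> = (\<Sum>b\<in>Basis. (h \<bullet> b) * g b x)"
            unfolding g_def by (simp add: sum_distrib_left)
          finally show "(\<Sum>j\<in>UNIV. Wmat x k j * h $ j) = (\<Sum>b\<in>Basis. (h \<bullet> b) * g b x)" .
        qed
      qed
    qed
    moreover have "\<forall>b\<in>Basis. salg S G (g b)"
    proof
      fix b :: "real^('n::{finite,linorder})" assume "b \<in> Basis"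
      have m: "salg S G (\<lambda>y. mu y k)" using k unfolding G_def by (intro salg.gen) auto
      have dd: "salg S G (\<lambda>y. mu y k - y $ i)" for i
      proof -
        have "salg S G (\<lambda>y. (-1) * (y \<bullet> axis i 1))" by (rule salg.mul[OF salg.cst salg.lin])
        then have "salg S G (\<lambda>y. mu y k + (-1) * (y \<bullet> axis i 1))" by (rule salg.add[OF m])
        then show ?thesis by (rule salg_cong) (simp add: cart_eq_inner_axis)
      qed
      have nz: "\<forall>y\<in>S. (mu y k - y $ i)^2 \<noteq> 0" for i
        using mu_props(1)[of _ k] k unfolding S_def by auto
      have sq: "salg S G (\<lambda>y. inverse ((mu y k - y $ i)^2))" for i
      proof -
        have "salg S G (\<lambda>y. (mu y k - y $ i) * (mu y k - y $ i))" by (rule salg.mul[OF dd dd])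
        then have "salg S G (\<lambda>y. (mu y k - y $ i)^2)" by (rule salg_cong) (simp add: power2_eq_square)
        then show ?thesis by (rule salg.inv) (rule nz)
      qed
      have sm: "salg S G (\<lambda>y. \<Sum>i\<in>UNIV. inverse ((mu y k - y $ i)^2))"
        by (rule salg_sum) (use sq in auto)
      have pos: "\<forall>y\<in>S. (\<Sum>i\<in>UNIV. inverse ((mu y k - y $ i)^2)) \<noteq> 0"
      proof
        fix y assume "y \<in> S"
        then have "(\<Sum>i\<in>UNIV. inverse ((mu y k - y $ i)^2)) > 0"
          using nz by (intro sum_pos) auto
        then show "(\<Sum>i\<in>UNIV. inverse ((mu y k - y $ i)^2)) \<noteq> 0" by simp
      qed
      have W: "salg S G (\<lambda>y. Wmat y k j)" for j
      proof -
        have "salg S G (\<lambda>y. inverse ((mu y k - y $ j)^2) * inverse (\<Sum>i\<in>UNIV. inverse ((mu y k - y $ i)^2)))"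
          by (rule salg.mul[OF sq salg.inv[OF sm pos]])
        then show ?thesis by (rule salg_cong) (simp add: Wmat_def divide_inverse)
      qed
      show "salg S G (g b)" unfolding g_def
        by (rule salg_sum) (auto intro: salg.mul[OF salg.cst W])
    qed
    ultimately show "\<exists>g. hasd S f g \<and> (\<forall>b\<in>Basis. salg S G (g b))" by blast
  qed
  have "salg S G (\<lambda>y. mu y k)" using assms unfolding G_def by (intro salg.gen) auto
  then show ?thesis using salg_smooth[OF genD] unfolding S_def by blast
qed



theorem mainTheorem4:
  fixes D :: "(real^'n::{finite,linorder}) set"
  defines "D \<equiv> decr_tuples"
  assumes "CARD('n) \<ge> 2"
  shows "(\<forall>k\<in>{1..CARD('n)-1}. smooth_on D (\<lambda>x. mu x k))
    \<and> (\<forall>x\<in>D. \<forall>k\<in>{1..CARD('n)-1}.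
          ((\<lambda>y. mu y k) has_derivative (\<lambda>h. \<Sum>j\<in>UNIV. Wmat x k j * h $ j)) (at x)
        \<and> (\<forall>j. Wmat x k j > 0)
        \<and> (\<Sum>j\<in>UNIV. Wmat x k j) = 1
        \<and> mu x k = (\<Sum>j\<in>UNIV. Wmat x k j * x $ j))
    \<and> (\<forall>x\<in>D. \<forall>j.
          (\<Sum>k=1..CARD('n)-1. Wmat x k j) = real (CARD('n) - 1) / real (CARD('n)))"
proof -
  have iv: "{1..CARD('n)-1} = {1..<CARD('n)}" by auto
  have A: "\<forall>k\<in>{1..<CARD('n)}. smooth_on (decr_tuples :: (real^('n::{finite,linorder})) set) (\<lambda>x. mu x k)"
    using mu_smooth by blast
  have B: "\<forall>x\<in>(decr_tuples :: (real^('n::{finite,linorder})) set). \<forall>k\<in>{1..<CARD('n)}.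
          ((\<lambda>y. mu y k) has_derivative (\<lambda>h. \<Sum>j\<in>UNIV. Wmat x k j * h $ j)) (at x)
        \<and> (\<forall>j. Wmat x k j > 0)
        \<and> (\<Sum>j\<in>UNIV. Wmat x k j) = 1
        \<and> mu x k = (\<Sum>j\<in>UNIV. Wmat x k j * x $ j)"
  proof (intro ballI)
    fix x :: "real^('n::{finite,linorder})" and k :: nat
    assume x: "x \<in> decr_tuples" and k: "k \<in> {1..<CARD('n)}"
    then have k': "1 \<le> k" "k < CARD('n)" by auto
    show "((\<lambda>y. mu y k) has_derivative (\<lambda>h. \<Sum>j\<in>UNIV. Wmat x k j * h $ j)) (at x)
        \<and> (\<forall>j. Wmat x k j > 0)
        \<and> (\<Sum>j\<in>UNIV. Wmat x k j) = 1
        \<and> mu x k = (\<Sum>j\<in>UNIV. Wmat x k j * x $ j)"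
      using mu_deriv[OF x k'] W_facts[OF x k'] by blast
  qed
  have C: "\<forall>x\<in>(decr_tuples :: (real^('n::{finite,linorder})) set). \<forall>j.
          (\<Sum>k\<in>{1..<CARD('n)}. Wmat x k j) = real (CARD('n) - 1) / real (CARD('n))"
    using colsum assms(2) by blast
  show ?thesis unfolding iv D_def using A B C by blast
qed

end
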